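(* Let $(X,\|\cdot,\cdot\|)$ be a $2$-normed space, $E\subseteq X$, and $f:E\to X$. If $f$ is statistically ward continuous on $E$, then $f$ is sequentially continuous on $E$: for every $x_0\in E$ and every sequence $(x_n)$ in $E$ converging to $x_0$, $(f(x_n))$ converges to $f(x_0)$.
   Context: A $2$-normed space is a real linear space $X$ with $\dim X>1$ together with a function $\|\cdot,\cdot\|:X^2\to\mathbb{R}$ such that for all $x,y,z\in X$, $\alpha\in\mathbb{R}$: (1) $\|x,y\|=0$ iff $x,y$ are linearly dependent; (2) $\|x,y\|=\|y,x\|$; (3) $\|\alpha x,y\|=|\alpha|\|x,y\|$; (4) $\|x,y+z\|\le\|x,y\|+\|x,z\|$. A sequence $(x_n)$ in $X$ converges to $x\in X$ if $\lim_{n\to\infty}\|x_n-x,z\|=0$ for every $z\in X$. For a sequence $(x_k)$ write $\Delta x_k=x_{k+1}-x_k$. A sequence $(x_k)$ in $X$ is statistically quasi-Cauchy if for every $\epsilon>0$ and every $z\in X$, $\lim_{n\to\infty}\frac1n|\{k\le n:\|\Delta x_k,z\|\ge\epsilon\}|=0$. A function $f:E\to X$ is statistically ward continuous on $E$ if $(f(x_k))$ is statistically quasi-Cauchy whenever $(x_k)$ is a statistically quasi-Cauchy sequence of points of $E$. *)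

theory Defs
  imports "HOL-Analysis.Analysis"
begin

definition lin_dep2 :: "'a::real_vector \<Rightarrow> 'a \<Rightarrow> bool" where
  "lin_dep2 x y \<longleftrightarrow> (\<exists>a b::real. (a \<noteq> 0 \<or> b \<noteq> 0) \<and> a *\<^sub>R x + b *\<^sub>R y = 0)"

definition two_normed :: "('a::real_vector \<Rightarrow> 'a \<Rightarrow> real) \<Rightarrow> bool" where
  "two_normed N \<longleftrightarrow>
     (\<exists>x y::'a. \<not> lin_dep2 x y) \<and>
     (\<forall>x y. N x y = 0 \<longleftrightarrow> lin_dep2 x y) \<and>
     (\<forall>x y. N x y = N y x) \<and>
     (\<forall>x y (\<alpha>::real). N (\<alpha> *\<^sub>R x) y = \<bar>\<alpha>\<bar> * N x y) \<and>
     (\<forall>x y z. N x (y + z) \<le> N x y + N x z)"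

definition tn_converges :: "('a::real_vector \<Rightarrow> 'a \<Rightarrow> real) \<Rightarrow> (nat \<Rightarrow> 'a) \<Rightarrow> 'a \<Rightarrow> bool" where
  "tn_converges N xs x \<longleftrightarrow> (\<forall>z. (\<lambda>n. N (xs n - x) z) \<longlonglongrightarrow> 0)"

definition stat_quasi_cauchy :: "('a::real_vector \<Rightarrow> 'a \<Rightarrow> real) \<Rightarrow> (nat \<Rightarrow> 'a) \<Rightarrow> bool" where
  "stat_quasi_cauchy N xs \<longleftrightarrow>
     (\<forall>\<epsilon>>0. \<forall>z. (\<lambda>n. real (card {k. k \<le> n \<and> N (xs (Suc k) - xs k) z \<ge> \<epsilon>}) / real n)
                    \<longlonglongrightarrow> 0)"

definition stat_ward_continuous :: "('a::real_vector \<Rightarrow> 'a \<Rightarrow> real) \<Rightarrow> 'a set \<Rightarrow> ('a \<Rightarrow> 'a) \<Rightarrow> bool" where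
  "stat_ward_continuous N E f \<longleftrightarrow>
     (\<forall>xs. (\<forall>k. xs k \<in> E) \<longrightarrow> stat_quasi_cauchy N xs \<longrightarrow> stat_quasi_cauchy N (\<lambda>k. f (xs k)))"

end

theory Submission
  imports Defs "HOL-Library.Infinite_Set"
begin

lemma tn_neg:
  assumes "two_normed N" shows "N (- v) z = N v z"
proof -
  have "N ((-1::real) *\<^sub>R v) z = \<bar>-1::real\<bar> * N v z"
    using assms unfolding two_normed_def by blast
  thus ?thesis by simp
qed

lemma tn_nonneg:
  assumes "two_normed N" shows "0 \<le> N x y"
proof -
  have "N x 0 = 0" using assms unfolding two_normed_def lin_dep2_def
    by (metis scale_zero_left scale_zero_right add_0 zero_neq_one)
  moreover have "N x (y + - y) \<le> N x y + N x (- y)"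
    using assms unfolding two_normed_def by blast
  moreover have "N x (- y) = N x y"
  proof -
    have s: "\<And>a b. N a b = N b a" using assms unfolding two_normed_def by blast
    have "N x (- y) = N (- y) x" by (rule s)
    also have "\<dots> = N y x" by (rule tn_neg[OF assms])
    also have "\<dots> = N x y" by (rule s)
    finally show ?thesis .
  qed
  ultimately show ?thesis by simp
qed

lemma key_sqc:
  assumes tn: "two_normed N"
    and d: "\<And>z. (\<lambda>j. N (g j - c) z) \<longlonglongrightarrow> 0"
  shows "stat_quasi_cauchy N (\<lambda>k. if even k then c else g (k div 2))"
  unfolding stat_quasi_cauchy_def
proof (intro allI impI)
  fix \<epsilon> :: real and z assume e: "\<epsilon> > 0"
  let ?y = "\<lambda>k. if even k then c else g (k div 2)"
  have eq: "N (?y (Suc k) - ?y k) z = N (g (k div 2) - c) z" for k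
  proof (cases "even k")
    case True
    have "odd (Suc k)" using True by simp
    moreover have "Suc k div 2 = k div 2" using True by presburger
    ultimately have "?y (Suc k) - ?y k = g (k div 2) - c" using True by simp
    thus ?thesis by (simp only:)
  next
    case False
    have "even (Suc k)" using False by simp
    then have "?y (Suc k) - ?y k = - (g (k div 2) - c)" using False by simp
    moreover have "N (- (g (k div 2) - c)) z = N (g (k div 2) - c) z" by (rule tn_neg[OF tn])
    ultimately show ?thesis by (simp only:)
  qed
  from d[of z] e have "eventually (\<lambda>j. N (g j - c) z < \<epsilon>) sequentially"
    by (rule order_tendstoD(2))
  then obtain M where M: "\<And>j. j \<ge> M \<Longrightarrow> N (g j - c) z < \<epsilon>"
    by (auto simp: eventually_sequentially)
  have sub: "{k. k \<le> n \<and> N (?y (Suc k) - ?y k) z \<ge> \<epsilon>} \<subseteq> {..<2*M}" for n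
  proof
    fix k assume "k \<in> {k. k \<le> n \<and> N (?y (Suc k) - ?y k) z \<ge> \<epsilon>}"
    then have "N (?y (Suc k) - ?y k) z \<ge> \<epsilon>" by blast
    then have ge: "N (g (k div 2) - c) z \<ge> \<epsilon>" using eq[of k] by linarith
    have "k div 2 < M"
    proof (rule ccontr)
      assume "\<not> k div 2 < M"
      then have "N (g (k div 2) - c) z < \<epsilon>" using M by simp
      thus False using ge by linarith
    qed
    thus "k \<in> {..<2*M}" by auto
  qed
  have cb: "card {k. k \<le> n \<and> N (?y (Suc k) - ?y k) z \<ge> \<epsilon>} \<le> 2*M" for n
    using card_mono[OF _ sub[of n]] by simp
  have lim: "(\<lambda>n. real (2*M) / real n) \<longlonglongrightarrow> 0"
    by (intro tendsto_divide_0[OF tendsto_const] filterlim_at_top_imp_at_infinity filterlim_real_sequentially)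
  show "(\<lambda>n. real (card {k. k \<le> n \<and> N (?y (Suc k) - ?y k) z \<ge> \<epsilon>}) / real n) \<longlonglongrightarrow> 0"
  proof (rule tendsto_sandwich[OF _ _ tendsto_const lim])
    show "\<forall>\<^sub>F n in sequentially. 0 \<le> real (card {k. k \<le> n \<and> N (?y (Suc k) - ?y k) z \<ge> \<epsilon>}) / real n"
      by simp
    show "\<forall>\<^sub>F n in sequentially. real (card {k. k \<le> n \<and> N (?y (Suc k) - ?y k) z \<ge> \<epsilon>}) / real n \<le> real (2*M) / real n"
      using cb by (intro always_eventually allI divide_right_mono) (auto simp del: of_nat_mult)
  qed
qed

theorem corollary3p1:
  fixes N :: "'a::real_vector \<Rightarrow> 'a \<Rightarrow> real" and E :: "'a set" and f :: "'a \<Rightarrow> 'a"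
  assumes "two_normed N"
    and "stat_ward_continuous N E f"
  shows "\<forall>x0 \<in> E. \<forall>xs. (\<forall>n. xs n \<in> E) \<longrightarrow> tn_converges N xs x0 \<longrightarrow>
           tn_converges N (\<lambda>n. f (xs n)) (f x0)"
proof (intro ballI allI impI)
  fix x0 xs assume x0: "x0 \<in> E" and xsE: "\<forall>n. xs n \<in> E" and conv: "tn_converges N xs x0"
  note tn = assms(1)
  show "tn_converges N (\<lambda>n. f (xs n)) (f x0)"
    unfolding tn_converges_def
  proof (rule allI, rule ccontr)
    fix z assume nc: "\<not> (\<lambda>n. N (f (xs n) - f x0) z) \<longlonglongrightarrow> 0"
    then obtain \<epsilon> where e: "\<epsilon> > 0" and fr: "\<not> eventually (\<lambda>n. N (f (xs n) - f x0) z < \<epsilon>) sequentially"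
      using tn_nonneg[OF tn] by (auto simp: tendsto_iff dist_real_def)
    let ?S = "{n. N (f (xs n) - f x0) z \<ge> \<epsilon>}"
    have "frequently (\<lambda>n. N (f (xs n) - f x0) z \<ge> \<epsilon>) sequentially"
      using fr by (simp add: frequently_def not_le)
    then have inf: "infinite ?S"
      by (simp add: frequently_cofinite cofinite_eq_sequentially[symmetric])
    define r where "r = enumerate ?S"
    have rmono: "strict_mono r" unfolding r_def using strict_mono_enumerate[OF inf] .
    have rS: "N (f (xs (r j)) - f x0) z \<ge> \<epsilon>" for j
      using enumerate_in_set[OF inf] unfolding r_def by blast
    define g where "g j = xs (r j)" for j
    define y where "y k = (if even k then x0 else g (k div 2))" for k
    have "(\<lambda>j. N (g j - x0) w) \<longlonglongrightarrow> 0" for w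
      using LIMSEQ_subseq_LIMSEQ[OF conv[unfolded tn_converges_def, rule_format, of w] rmono]
      by (simp add: g_def o_def)
    then have sq: "stat_quasi_cauchy N y" unfolding y_def by (rule key_sqc[OF tn])
    have yE: "\<forall>k. y k \<in> E" using x0 xsE by (simp add: y_def g_def)
    have sqf: "stat_quasi_cauchy N (\<lambda>k. f (y k))"
      using assms(2) yE sq unfolding stat_ward_continuous_def by blast
    have eq: "N (f (y (Suc k)) - f (y k)) z = N (f (g (k div 2)) - f x0) z" for k
    proof (cases "even k")
      case True
      have "odd (Suc k)" using True by simp
      moreover have "Suc k div 2 = k div 2" using True by presburger
      ultimately have "f (y (Suc k)) - f (y k) = f (g (k div 2)) - f x0" using True by (simp add: y_def)
      thus ?thesis by (simp only:)
    next
      case False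
      have "even (Suc k)" using False by simp
      then have "f (y (Suc k)) - f (y k) = - (f (g (k div 2)) - f x0)" using False by (simp add: y_def)
      moreover have "N (- (f (g (k div 2)) - f x0)) z = N (f (g (k div 2)) - f x0) z" by (rule tn_neg[OF tn])
      ultimately show ?thesis by (simp only:)
    qed
    have all: "{k. k \<le> n \<and> N (f (y (Suc k)) - f (y k)) z \<ge> \<epsilon>} = {..n}" for n
      using eq rS by (auto simp: g_def)
    have "(\<lambda>n. real (card {k. k \<le> n \<and> N (f (y (Suc k)) - f (y k)) z \<ge> \<epsilon>}) / real n) \<longlonglongrightarrow> 0"
      using sqf e unfolding stat_quasi_cauchy_def by blast
    then have "(\<lambda>n. real (Suc n) / real n) \<longlonglongrightarrow> 0" by (simp add: all)
    moreover have "(\<lambda>n. real (Suc n) / real n) \<longlonglongrightarrow> 1" using LIMSEQ_Suc_n_over_n by simp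
    ultimately show False using LIMSEQ_unique by fastforce
  qed
qed

end
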